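(* Let $d$ be even and let $T:\mathcal{M}_d\to\mathcal{M}_d$ be a quantum channel (linear, completely positive, trace-preserving) which is $O(d)$-covariant, i.e. $T(O\rho O^T)=O\,T(\rho)\,O^T$ for all $\rho\in\mathcal{M}_d$ and all real orthogonal $O\in\mathcal{M}_d$. Then $T$ is a mixture of unitary channels: $T(\rho)=\sum_ip_iU_i\rho U_i^\dagger$ for some probabilities $p_i$ and unitaries $U_i$. *)

theory Defs
  imports "HOL-Analysis.Analysis" "HOL-Library.Complex_Order"
begin

text \<open>d x d complex matrices are modelled as complex^'n^'n with d = CARD('n).\<close>

definition cmat_adj :: "complex^'n^'n \<Rightarrow> complex^'n^'n" where
  "cmat_adj A = (\<chi> i j. cnj (A $ j $ i))"

definition cmat_scale :: "complex \<Rightarrow> complex^'n^'n \<Rightarrow> complex^'n^'n" where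
  "cmat_scale c A = (\<chi> i j. c * A $ i $ j)"

definition cinner :: "complex^'n \<Rightarrow> complex^'n \<Rightarrow> complex" where
  "cinner u w = (\<Sum>a\<in>UNIV. cnj (u $ a) * w $ a)"

definition cunitary :: "complex^'n^'n \<Rightarrow> bool" where
  "cunitary U \<longleftrightarrow> U ** cmat_adj U = mat 1 \<and> cmat_adj U ** U = mat 1"

definition real_orthogonal :: "complex^'n^'n \<Rightarrow> bool" where
  "real_orthogonal Q \<longleftrightarrow> (\<forall>i j. Im (Q $ i $ j) = 0) \<and> Q ** transpose Q = mat 1"

definition clinear_map :: "(complex^'n^'n \<Rightarrow> complex^'n^'n) \<Rightarrow> bool" where
  "clinear_map T \<longleftrightarrow> (\<forall>A B. T (A + B) = T A + T B) \<and> (\<forall>c A. T (cmat_scale c A) = cmat_scale c (T A))"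

text \<open>A k x k block matrix with d x d blocks X i j (i, j < k), i.e. an element of
  M_k(M_d) = M_k \<otimes> M_d, is positive semidefinite.\<close>
definition block_psd :: "nat \<Rightarrow> (nat \<Rightarrow> nat \<Rightarrow> complex^'n^'n) \<Rightarrow> bool" where
  "block_psd k X \<longleftrightarrow> (\<forall>v :: nat \<Rightarrow> complex^'n.
      0 \<le> (\<Sum>i<k. \<Sum>j<k. cinner (v i) (X i j *v v j)))"

text \<open>Complete positivity: id_k \<otimes> T is positive for every k.\<close>
definition completely_positive :: "(complex^'n^'n \<Rightarrow> complex^'n^'n) \<Rightarrow> bool" where
  "completely_positive T \<longleftrightarrow>
     (\<forall>k X. block_psd k X \<longrightarrow> block_psd k (\<lambda>i j. T (X i j)))"

definition trace_preserving :: "(complex^'n^'n \<Rightarrow> complex^'n^'n) \<Rightarrow> bool" where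
  "trace_preserving T \<longleftrightarrow> (\<forall>\<rho>. trace (T \<rho>) = trace \<rho>)"

definition quantum_channel :: "(complex^'n^'n \<Rightarrow> complex^'n^'n) \<Rightarrow> bool" where
  "quantum_channel T \<longleftrightarrow> clinear_map T \<and> completely_positive T \<and> trace_preserving T"

end

theory Submission
  imports Defs
begin


section \<open>Mixtures of unitary conjugations\<close>

definition MUw :: "real \<Rightarrow> (complex^'n^'n \<Rightarrow> complex^'n^'n) \<Rightarrow> bool" where
  "MUw w T \<longleftrightarrow> (\<exists>m (p :: nat \<Rightarrow> real) U. (\<forall>i<m. 0 \<le> p i \<and> cunitary (U i)) \<and> (\<Sum>i<m. p i) = w \<and>
           (\<forall>\<rho>. T \<rho> = (\<Sum>i<m. cmat_scale (complex_of_real (p i)) (U i ** \<rho> ** cmat_adj (U i)))))"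

lemma MUw_family:
  fixes p :: "'a \<Rightarrow> real" and U :: "'a \<Rightarrow> complex^'n^'n"
  assumes "finite S" "\<And>x. x \<in> S \<Longrightarrow> 0 \<le> p x \<and> cunitary (U x)"
    and "\<And>\<rho>. T \<rho> = (\<Sum>x\<in>S. cmat_scale (complex_of_real (p x)) (U x ** \<rho> ** cmat_adj (U x)))"
    and "w = (\<Sum>x\<in>S. p x)"
  shows "MUw w T"
proof -
  obtain h where h: "bij_betw h {0..<card S} S" using ex_bij_betw_nat_finite[OF assms(1)] by blast
  have hS: "i < card S \<Longrightarrow> h i \<in> S" for i using h by (auto simp: bij_betw_def)
  show ?thesis unfolding MUw_def
  proof (intro exI conjI allI impI)
    show "0 \<le> (p \<circ> h) i" "cunitary ((U \<circ> h) i)" if "i < card S" for i using assms(2)[OF hS[OF that]] by auto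
    show "(\<Sum>i<card S. (p \<circ> h) i) = w"
      using sum.reindex_bij_betw[OF h, of p] assms(4) by (simp add: atLeast0LessThan)
    show "T \<rho> = (\<Sum>i<card S. cmat_scale (complex_of_real ((p \<circ> h) i)) ((U \<circ> h) i ** \<rho> ** cmat_adj ((U \<circ> h) i)))" for \<rho>
      using sum.reindex_bij_betw[OF h, of "\<lambda>x. cmat_scale (complex_of_real (p x)) (U x ** \<rho> ** cmat_adj (U x))"] assms(3)
      by (simp add: atLeast0LessThan)
  qed
qed

lemma MUw_add:
  fixes T1 T2 :: "complex^'n^'n \<Rightarrow> complex^'n^'n"
  assumes "MUw w1 T1" "MUw w2 T2"
  shows "MUw (w1 + w2) (\<lambda>\<rho>. T1 \<rho> + T2 \<rho>)"
proof -
  obtain m1 p1 and U1 :: "nat \<Rightarrow> complex^'n^'n" where 10: "(\<forall>i<m1. 0 \<le> p1 i \<and> cunitary (U1 i)) \<and> (\<Sum>i<m1. p1 i) = w1 \<and>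
    (\<forall>\<rho>. T1 \<rho> = (\<Sum>i<m1. cmat_scale (complex_of_real (p1 i)) (U1 i ** \<rho> ** cmat_adj (U1 i))))"
    using assms(1) unfolding MUw_def by (elim exE) (rule that, assumption)
  note 1 = 10[THEN conjunct1] 10[THEN conjunct2, THEN conjunct1] 10[THEN conjunct2, THEN conjunct2, rule_format]
  obtain m2 p2 and U2 :: "nat \<Rightarrow> complex^'n^'n" where 20: "(\<forall>i<m2. 0 \<le> p2 i \<and> cunitary (U2 i)) \<and> (\<Sum>i<m2. p2 i) = w2 \<and>
    (\<forall>\<rho>. T2 \<rho> = (\<Sum>i<m2. cmat_scale (complex_of_real (p2 i)) (U2 i ** \<rho> ** cmat_adj (U2 i))))"
    using assms(2) unfolding MUw_def by (elim exE) (rule that, assumption)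
  note 2 = 20[THEN conjunct1] 20[THEN conjunct2, THEN conjunct1] 20[THEN conjunct2, THEN conjunct2, rule_format]
  have sumP: "(\<Sum>x\<in>{..<m1} <+> {..<m2}. F x) = (\<Sum>i<m1. F (Inl i)) + (\<Sum>i<m2. F (Inr i))" for F :: "nat + nat \<Rightarrow> 'z::comm_monoid_add"
    by (simp add: sum.Plus comp_def)
  show ?thesis
  proof (rule MUw_family[where S = "{..<m1} <+> {..<m2}" and p = "case_sum p1 p2" and U = "case_sum U1 U2"])
    show "finite ({..<m1} <+> {..<m2})" by simp
    show "0 \<le> case_sum p1 p2 x \<and> cunitary (case_sum U1 U2 x)" if "x \<in> {..<m1} <+> {..<m2}" for x
      using that 1(1) 2(1) by auto
    show "T1 \<rho> + T2 \<rho> = (\<Sum>x\<in>{..<m1} <+> {..<m2}. cmat_scale (complex_of_real (case_sum p1 p2 x))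
          (case_sum U1 U2 x ** \<rho> ** cmat_adj (case_sum U1 U2 x)))" for \<rho>
      unfolding sumP 1(3) 2(3) by simp
    show "w1 + w2 = (\<Sum>x\<in>{..<m1} <+> {..<m2}. case_sum p1 p2 x)"
      using 1(2) 2(2) unfolding sumP by simp
  qed
qed

lemma MUw_cong: "MUw w T \<Longrightarrow> (\<And>\<rho>. T \<rho> = T' \<rho>) \<Longrightarrow> w = w' \<Longrightarrow> MUw w' T'"
proof -
  assume "MUw w T" "\<And>\<rho>. T \<rho> = T' \<rho>" "w = w'"
  moreover have "T = T'" using \<open>\<And>\<rho>. T \<rho> = T' \<rho>\<close> by (rule ext)
  ultimately show ?thesis by simp
qed

section \<open>Monomial unitaries\<close>

definition mmono :: "('n \<Rightarrow> 'n) \<Rightarrow> ('n \<Rightarrow> complex) \<Rightarrow> complex^'n^'n" where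
  "mmono m \<psi> = (\<chi> a x. if a = m x then \<psi> x else 0)"

lemma invol_eq: "(\<And>x. m (m x) = x) \<Longrightarrow> (a = m x) = (x = m a)" by metis

lemma sum_invol:
  assumes inv: "\<And>x. m (m x) = x"
  shows "(\<Sum>x\<in>(UNIV::'a::finite set). if a = m x then f x else 0) = f (m a)"
proof -
  have "(\<Sum>x\<in>UNIV. if a = m x then f x else 0) = (\<Sum>x\<in>UNIV. if x = m a then f x else 0)"
    by (rule sum.cong) (auto simp: invol_eq[OF inv])
  also have "\<dots> = f (m a)" by simp
  finally show ?thesis .
qed

lemma mono_mult_left:
  assumes inv: "\<And>x. m (m x) = x"
  shows "(mmono m \<psi> ** B) $ a $ y = \<psi> (m a) * B $ m a $ y"
proof -
  have "(mmono m \<psi> ** B) $ a $ y = (\<Sum>x\<in>UNIV. if a = m x then \<psi> x * B $ x $ y else 0)"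
    unfolding matrix_matrix_mult_def mmono_def by (simp add: if_distrib[of "\<lambda>z. z * _"] cong: if_cong)
  also have "\<dots> = \<psi> (m a) * B $ m a $ y" by (rule sum_invol[OF inv])
  finally show ?thesis .
qed

lemma mono_adj_right:
  assumes inv: "\<And>x. m (m x) = x"
  shows "(B ** cmat_adj (mmono m \<psi>)) $ a $ b = B $ a $ m b * cnj (\<psi> (m b))"
proof -
  have "(B ** cmat_adj (mmono m \<psi>)) $ a $ b = (\<Sum>y\<in>UNIV. if b = m y then B $ a $ y * cnj (\<psi> y) else 0)"
    unfolding matrix_matrix_mult_def mmono_def cmat_adj_def by (simp add: if_distrib[of cnj] if_distrib[of "\<lambda>z. _ * z"] cong: if_cong)
  also have "\<dots> = B $ a $ m b * cnj (\<psi> (m b))" by (rule sum_invol[OF inv])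
  finally show ?thesis .
qed

lemma mono_unitary:
  assumes inv: "\<And>x. m (m x) = x" and ps: "\<And>x. cmod (\<psi> x) = 1"
  shows "cunitary (mmono m \<psi>)"
proof -
  have ps2: "\<psi> x * cnj (\<psi> x) = 1" for x
    using ps[of x] by (metis complex_norm_square mult.commute of_real_1 power_one)
  have ps3: "cnj (\<psi> x) * \<psi> x = 1" for x using ps2[of x] by (simp add: mult.commute)
  have A: "mmono m \<psi> ** cmat_adj (mmono m \<psi>) = mat 1"
  proof -
    have "(mmono m \<psi> ** cmat_adj (mmono m \<psi>)) $ a $ b = mat 1 $ a $ b" for a b
      by (subst mono_mult_left[OF inv]) (simp add: cmat_adj_def mmono_def mat_def inv ps2)
    thus ?thesis by (simp add: vec_eq_iff)
  qed
  have B: "cmat_adj (mmono m \<psi>) ** mmono m \<psi> = mat 1"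
  proof -
    have me: "mmono m \<psi> $ x $ y = (if x = m y then \<psi> y else 0)" for x y by (simp add: mmono_def)
    have "(cmat_adj (mmono m \<psi>) ** mmono m \<psi>) $ a $ b = mat 1 $ a $ b" for a b
    proof -
      have "(cmat_adj (mmono m \<psi>) ** mmono m \<psi>) $ a $ b = (\<Sum>x\<in>UNIV. cnj (mmono m \<psi> $ x $ a) * mmono m \<psi> $ x $ b)"
        by (simp add: matrix_matrix_mult_def cmat_adj_def)
      also have "\<dots> = (\<Sum>x\<in>UNIV. if x = m a then (if a = b then 1 else 0) else 0)"
      proof (rule sum.cong)
        fix x
        show "cnj (mmono m \<psi> $ x $ a) * mmono m \<psi> $ x $ b = (if x = m a then (if a = b then 1 else 0) else 0)"
        proof (cases "x = m a")
          case True
          then show ?thesis unfolding me using ps3[of a] inv[of a] inv[of b] by auto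
        next
          case False
          then show ?thesis unfolding me by simp
        qed
      qed simp
      also have "\<dots> = mat 1 $ a $ b" by (simp add: mat_def)
      finally show ?thesis .
    qed
    thus ?thesis by (simp add: vec_eq_iff)
  qed
  show ?thesis unfolding cunitary_def using A B by (rule conjI)
qed

lemma mono_conj:
  assumes inv: "\<And>x. m (m x) = x"
  shows "(mmono m \<psi> ** \<rho> ** cmat_adj (mmono m \<psi>)) $ a $ b = \<psi> (m a) * \<rho> $ m a $ m b * cnj (\<psi> (m b))"
  by (subst mono_adj_right[OF inv], subst mono_mult_left[OF inv], rule refl)

lemma root_orth:
  fixes d s t :: nat
  assumes "0 < d" "s < d" "t < d"
  shows "(\<Sum>j<d. cis (2*pi*real j*real s/real d) * cnj (cis (2*pi*real j*real t/real d)))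
         = (if s = t then of_nat d else 0)"
proof (cases "s = t")
  case True
  then show ?thesis by (simp add: cis_cnj cis_mult)
next
  case False
  define z where "z = cis (2*pi*(real s - real t)/real d)"
  have eq: "cis (2*pi*real j*real s/real d) * cnj (cis (2*pi*real j*real t/real d)) = z ^ j" for j
  proof -
    have "z ^ j = cis (real j * (2*pi*(real s - real t)/real d))" unfolding z_def by (rule Complex.DeMoivre)
    also have "real j * (2*pi*(real s - real t)/real d) = 2*pi*real j*real s/real d - 2*pi*real j*real t/real d"
      using assms by (simp add: field_simps)
    finally show ?thesis by (simp add: cis_cnj cis_mult)
  qed
  have "z \<noteq> 1"
  proof
    assume "z = 1"
    then obtain k :: int where k: "2*pi*(real s - real t)/real d = of_int k * 2 * pi"
      by (auto simp: z_def complex_eq_iff cos_one_2pi_int)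
    hence "2*pi*(real s - real t) = 2*pi*(real d * of_int k)" using assms by (simp add: field_simps)
    hence "real s - real t = real d * of_int k" by (simp only: mult_cancel_left) simp
    hence "int s - int t = int d * k" by (metis of_int_eq_iff of_int_mult of_int_of_nat_eq of_int_diff)
    moreover have "\<bar>int s - int t\<bar> < int d" using assms by auto
    ultimately have "k = 0"
    proof -
      assume a1: "int s - int t = int d * k" and a2: "\<bar>int s - int t\<bar> < int d"
      show "k = 0"
      proof (rule ccontr)
        assume "k \<noteq> 0"
        hence "1 \<le> \<bar>k\<bar>" by simp
        hence "int d * 1 \<le> int d * \<bar>k\<bar>" by (rule mult_left_mono) simp
        hence "int d \<le> \<bar>int d * k\<bar>" by (simp add: abs_mult)
        with a1 a2 show False by simp
      qed
    qed
    with \<open>int s - int t = int d * k\<close> False show False by simp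
  qed
  have "z ^ d = cis (2*pi*(real s - real t))" using assms by (simp add: z_def Complex.DeMoivre)
  also have "\<dots> = 1"
  proof -
    have "real s - real t \<in> \<int>" by simp
    thus ?thesis by (rule cis_multiple_2pi)
  qed
  finally have zd: "z ^ d = 1" .
  have "(\<Sum>j<d. cis (2*pi*real j*real s/real d) * cnj (cis (2*pi*real j*real t/real d))) = (\<Sum>j<d. z^j)"
    by (simp add: eq)
  also have "\<dots> = 0" using \<open>z \<noteq> 1\<close> zd by (simp add: geometric_sum)
  finally show ?thesis using False by simp
qed


definition ph :: "nat \<Rightarrow> nat \<Rightarrow> nat \<Rightarrow> complex" where
  "ph d j s = cis (2*pi*real j*real s/real d)"

lemma ph_norm[simp]: "cmod (ph d j s * (if P then 1 else -1)) = 1"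
  by (simp add: ph_def norm_mult)

lemma ph_norm1[simp]: "cmod (ph d j s) = 1"
  by (simp add: ph_def)

lemma mono_avg:
  fixes m :: "'n::finite \<Rightarrow> 'n" and g :: "'n \<Rightarrow> nat" and \<sigma> :: "'n \<Rightarrow> complex"
  assumes inv: "\<And>x. m (m x) = x" and g: "\<And>x. g x < CARD('n)"
  shows "(\<Sum>j<CARD('n). mmono m (\<lambda>x. ph CARD('n) j (g x) * \<sigma> x) ** \<rho> ** cmat_adj (mmono m (\<lambda>x. ph CARD('n) j (g x) * \<sigma> x))) $ a $ b
     = (if g (m a) = g (m b) then of_nat CARD('n) * (\<sigma> (m a) * \<rho> $ m a $ m b * cnj (\<sigma> (m b))) else 0)"
proof -
  have "(\<Sum>j<CARD('n). mmono m (\<lambda>x. ph CARD('n) j (g x) * \<sigma> x) ** \<rho> ** cmat_adj (mmono m (\<lambda>x. ph CARD('n) j (g x) * \<sigma> x))) $ a $ b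
     = (\<Sum>j<CARD('n). (ph CARD('n) j (g (m a)) * cnj (ph CARD('n) j (g (m b)))) * (\<sigma> (m a) * \<rho> $ m a $ m b * cnj (\<sigma> (m b))))"
    unfolding sum_component
  proof (rule sum.cong[OF refl])
    fix j
    show "(mmono m (\<lambda>x. ph CARD('n) j (g x) * \<sigma> x) ** \<rho> ** cmat_adj (mmono m (\<lambda>x. ph CARD('n) j (g x) * \<sigma> x))) $ a $ b
      = (ph CARD('n) j (g (m a)) * cnj (ph CARD('n) j (g (m b)))) * (\<sigma> (m a) * \<rho> $ m a $ m b * cnj (\<sigma> (m b)))"
      unfolding mono_conj[OF inv] by (simp only: complex_cnj_mult mult_ac)
  qed
  also have "\<dots> = (\<Sum>j<CARD('n). ph CARD('n) j (g (m a)) * cnj (ph CARD('n) j (g (m b)))) * (\<sigma> (m a) * \<rho> $ m a $ m b * cnj (\<sigma> (m b)))"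
    by (simp add: sum_distrib_right)
  also have "(\<Sum>j<CARD('n). ph CARD('n) j (g (m a)) * cnj (ph CARD('n) j (g (m b)))) = (if g (m a) = g (m b) then of_nat CARD('n) else 0)"
    unfolding ph_def by (rule root_orth) (auto intro: g)
  finally show ?thesis by simp
qed

section \<open>Round robin\<close>

lemma small_dvd: "(n::int) dvd k \<Longrightarrow> \<bar>k\<bar> < n \<Longrightarrow> k = 0"
proof -
  assume "n dvd k" "\<bar>k\<bar> < n"
  then obtain q where q: "k = n * q" by (auto simp: dvd_def)
  show "k = 0"
  proof (rule ccontr)
    assume "k \<noteq> 0"
    hence "q \<noteq> 0" using q by auto
    hence "1 \<le> \<bar>q\<bar>" by simp
    moreover have "0 < n" using \<open>\<bar>k\<bar> < n\<close> by simp
    ultimately have "n * 1 \<le> n * \<bar>q\<bar>" by (intro mult_left_mono) auto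
    hence "n \<le> \<bar>k\<bar>" using q \<open>0 < n\<close> by (simp add: abs_mult)
    with \<open>\<bar>k\<bar> < n\<close> show False by simp
  qed
qed

lemma odd_dvd2: "odd (n::int) \<Longrightarrow> n dvd 2 * k \<Longrightarrow> n dvd k"
proof -
  assume "odd n" "n dvd 2 * k"
  then obtain t where t: "n + 1 = 2 * t" by (metis evenE odd_add odd_one)
  have "(2 * k) * t = k * (n + 1)" unfolding t by (simp add: algebra_simps)
  hence "k = (2 * k) * t - n * k" by (simp add: algebra_simps)
  also have "n dvd \<dots>"
  proof (rule dvd_diff)
    show "n dvd 2 * k * t" using \<open>n dvd 2 * k\<close> by (rule dvd_mult2)
  qed simp
  finally show ?thesis .
qed

definition rr :: "nat \<Rightarrow> nat \<Rightarrow> nat \<Rightarrow> nat" where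
  "rr d r x = (if x = d - 1 then r else if x = r then d - 1 else nat ((2 * int r - int x) mod int (d - 1)))"

context
  fixes d :: nat
  assumes ev: "even d" and d2: "2 \<le> d"
begin

lemma n_odd: "odd (int (d - 1))"
  using ev d2 by auto

lemma rr_third:
  assumes "r < d - 1" "x < d - 1" "x \<noteq> r"
  shows "int (rr d r x) = (2 * int r - int x) mod int (d - 1)"
    "rr d r x < d - 1" "rr d r x \<noteq> r" "rr d r x \<noteq> x"
proof -
  let ?n = "int (d - 1)"
  have np: "0 < ?n" using d2 by simp
  show eq: "int (rr d r x) = (2 * int r - int x) mod ?n"
    using assms np by (simp add: rr_def)
  have "(2 * int r - int x) mod ?n < ?n" using np by simp
  with eq show "rr d r x < d - 1" by linarith
  show "rr d r x \<noteq> r"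
  proof
    assume h: "rr d r x = r"
    have "(2 * int r - int x) mod ?n = int r mod ?n" using eq h assms by simp
    hence "?n dvd (2 * int r - int x) - int r" by (simp add: mod_eq_dvd_iff)
    hence "?n dvd int r - int x" by (simp add: algebra_simps)
    hence "int r - int x = 0" by (rule small_dvd) (use assms in auto)
    with assms show False by simp
  qed
  show "rr d r x \<noteq> x"
  proof
    assume h: "rr d r x = x"
    have "(2 * int r - int x) mod ?n = int x mod ?n" using eq h assms by simp
    hence "?n dvd (2 * int r - int x) - int x" by (simp add: mod_eq_dvd_iff)
    hence "?n dvd 2 * (int r - int x)" by (simp add: algebra_simps)
    hence "?n dvd int r - int x" by (rule odd_dvd2[OF n_odd])
    hence "int r - int x = 0" by (rule small_dvd) (use assms in auto)
    with assms show False by simp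
  qed
qed

lemma rr_a: "rr d r (d - 1) = r" by (simp add: rr_def)
lemma rr_b: "r < d - 1 \<Longrightarrow> rr d r r = d - 1" by (simp add: rr_def)

lemma rr_lt: "r < d - 1 \<Longrightarrow> x < d \<Longrightarrow> rr d r x < d"
proof -
  assume r: "r < d - 1" and x: "x < d"
  show ?thesis
  proof (cases "x = d - 1 \<or> x = r")
    case True then show ?thesis using r d2 rr_a rr_b by auto
  next
    case False
    hence "x < d - 1" "x \<noteq> r" using x by auto
    from rr_third(2)[OF r this] show ?thesis by simp
  qed
qed

lemma rr_ne: "r < d - 1 \<Longrightarrow> x < d \<Longrightarrow> rr d r x \<noteq> x"
proof -
  assume r: "r < d - 1" and x: "x < d"
  show ?thesis
  proof (cases "x = d - 1 \<or> x = r")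
    case True then show ?thesis using r d2 rr_a rr_b by auto
  next
    case False
    hence "x < d - 1" "x \<noteq> r" using x by auto
    from rr_third(4)[OF r this] show ?thesis .
  qed
qed

lemma rr_invol: "r < d - 1 \<Longrightarrow> x < d \<Longrightarrow> rr d r (rr d r x) = x"
proof -
  assume r: "r < d - 1" and x: "x < d"
  let ?n = "int (d - 1)"
  show ?thesis
  proof (cases "x = d - 1 \<or> x = r")
    case True
    then show ?thesis using r rr_a rr_b by auto
  next
    case False
    hence x': "x < d - 1" "x \<noteq> r" using x by auto
    note t = rr_third[OF r x']
    have "int (rr d r (rr d r x)) = (2 * int r - int (rr d r x)) mod ?n"
      using rr_third(1)[OF r t(2) t(3)] .
    also have "\<dots> = (2 * int r - (2 * int r - int x) mod ?n) mod ?n" using t(1) by simp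
    also have "\<dots> = (2 * int r - (2 * int r - int x)) mod ?n" by (simp add: mod_diff_right_eq)
    also have "\<dots> = int x" using x' by simp
    finally show ?thesis by simp
  qed
qed

lemma rr_inj: "x < d \<Longrightarrow> inj_on (\<lambda>r. rr d r x) {..<d - 1}"
proof (rule inj_onI)
  fix r r' assume x: "x < d" and r: "r \<in> {..<d - 1}" and r': "r' \<in> {..<d - 1}" and h: "rr d r x = rr d r' x"
  show "r = r'"
  proof (cases "x = d - 1")
    case True then show ?thesis using h rr_a by simp
  next
    case False
    hence x': "x < d - 1" using x by simp
    show ?thesis
    proof (cases "x = r \<or> x = r'")
      case True
      then show ?thesis
      proof
        assume "x = r"
        hence "rr d r' x = d - 1" using h rr_b r by auto
        hence "\<not> (x \<noteq> r')" using rr_third(2)[of r' x] r' x' by auto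
        thus ?thesis using \<open>x = r\<close> by simp
      next
        assume "x = r'"
        hence "rr d r x = d - 1" using h rr_b r' by auto
        hence "\<not> (x \<noteq> r)" using rr_third(2)[of r x] r x' by auto
        thus ?thesis using \<open>x = r'\<close> by simp
      qed
    next
      case False
      let ?n = "int (d - 1)"
      have "(2 * int r - int x) mod ?n = (2 * int r' - int x) mod ?n"
        using h rr_third(1)[of r x] rr_third(1)[of r' x] r r' x' False by auto
      hence "?n dvd (2 * int r - int x) - (2 * int r' - int x)" by (simp add: mod_eq_dvd_iff)
      hence "?n dvd 2 * (int r - int r')" by (simp add: algebra_simps)
      hence "?n dvd int r - int r'" by (rule odd_dvd2[OF n_odd])
      hence "int r - int r' = 0" by (rule small_dvd) (use r r' in auto)
      thus ?thesis by simp
    qed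
  qed
qed

lemma rr_bij: "x < d \<Longrightarrow> bij_betw (\<lambda>r. rr d r x) {..<d - 1} ({..<d} - {x})"
proof (rule bij_betw_imageI)
  assume x: "x < d"
  show inj: "inj_on (\<lambda>r. rr d r x) {..<d - 1}" by (rule rr_inj[OF x])
  have sub: "(\<lambda>r. rr d r x) ` {..<d - 1} \<subseteq> {..<d} - {x}"
    using rr_lt rr_ne x by auto
  have "card ((\<lambda>r. rr d r x) ` {..<d - 1}) = card ({..<d} - {x})"
    using card_image[OF inj] x by simp
  thus "(\<lambda>r. rr d r x) ` {..<d - 1} = {..<d} - {x}"
    using card_subset_eq[OF _ sub] by simp
qed

end


definition Mt :: "('n::finite \<Rightarrow> nat) \<Rightarrow> nat \<Rightarrow> 'n \<Rightarrow> 'n" where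
  "Mt e r x = inv_into UNIV e (rr CARD('n) r (e x))"

definition lab :: "('n::finite \<Rightarrow> nat) \<Rightarrow> nat \<Rightarrow> 'n \<Rightarrow> nat" where
  "lab e r x = min (e x) (e (Mt e r x))"

definition sgm :: "('n::finite \<Rightarrow> nat) \<Rightarrow> nat \<Rightarrow> 'n \<Rightarrow> complex" where
  "sgm e r x = (if e x < e (Mt e r x) then 1 else -1)"

context
  fixes e :: "'n::finite \<Rightarrow> nat"
  assumes eb: "bij_betw e UNIV {..<CARD('n)}" and evn: "even CARD('n)"
begin

lemma d2: "2 \<le> CARD('n)"
  using evn by (metis One_nat_def Suc_1 Suc_leI dvd_imp_le even_Suc_div_two finite_UNIV_card_ge_0
      finite odd_one zero_less_card_finite)

lemma e_lt: "e x < CARD('n)" using eb by (auto simp: bij_betw_def)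
lemma e_inj: "e x = e y \<longleftrightarrow> x = y" using eb by (auto simp: bij_betw_def inj_on_def)
lemma ei_e: "inv_into UNIV e (e x) = x" using bij_betw_inv_into_left[OF eb] by simp
lemma e_ei: "y < CARD('n) \<Longrightarrow> e (inv_into UNIV e y) = y" using bij_betw_inv_into_right[OF eb] by simp

lemma Mt_e: "r < CARD('n) - 1 \<Longrightarrow> e (Mt e r x) = rr CARD('n) r (e x)"
  unfolding Mt_def by (rule e_ei) (rule rr_lt[OF evn d2], auto intro: e_lt)

lemma Mt_invol: "r < CARD('n) - 1 \<Longrightarrow> Mt e r (Mt e r x) = x"
proof -
  assume r: "r < CARD('n) - 1"
  have "Mt e r (Mt e r x) = inv_into UNIV e (rr CARD('n) r (rr CARD('n) r (e x)))"
    unfolding Mt_def[of e r "Mt e r x"] Mt_e[OF r] ..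
  also have "\<dots> = x" using rr_invol[OF evn d2 r e_lt] ei_e by simp
  finally show ?thesis .
qed

lemma Mt_ne: "r < CARD('n) - 1 \<Longrightarrow> Mt e r x \<noteq> x"
proof
  assume r: "r < CARD('n) - 1" and h: "Mt e r x = x"
  have "e (Mt e r x) = e x" using h by simp
  thus False using Mt_e[OF r] rr_ne[OF evn d2 r e_lt] by simp
qed

lemma sum_Mt: "(\<Sum>r<CARD('n) - 1. f (Mt e r x)) = (\<Sum>z\<in>UNIV - {x}. f z)"
proof -
  have "(\<Sum>r<CARD('n) - 1. f (Mt e r x)) = (\<Sum>r<CARD('n) - 1. (\<lambda>y. f (inv_into UNIV e y)) (rr CARD('n) r (e x)))"
    by (simp add: Mt_def)
  also have "\<dots> = (\<Sum>y\<in>{..<CARD('n)} - {e x}. f (inv_into UNIV e y))"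
    by (rule sum.reindex_bij_betw[OF rr_bij[OF evn d2 e_lt]])
  also have "\<dots> = (\<Sum>z\<in>UNIV - {x}. f z)"
  proof (rule sum.reindex_bij_betw)
    have im: "e ` (UNIV - {x}) = {..<CARD('n)} - {e x}"
      using eb by (auto simp: bij_betw_def inj_on_def)
    show "bij_betw (inv_into UNIV e) ({..<CARD('n)} - {e x}) (UNIV - {x})"
      using bij_betw_inv_into_subset[OF eb subset_UNIV im] .
  qed
  finally show ?thesis .
qed

lemma lab_lt: "lab e r x < CARD('n)" by (simp add: lab_def e_lt min_less_iff_disj)

lemma lab_Mt: "r < CARD('n) - 1 \<Longrightarrow> lab e r (Mt e r x) = lab e r x"
  by (simp add: lab_def Mt_invol min.commute)

lemma lab_eq: "r < CARD('n) - 1 \<Longrightarrow> lab e r a = lab e r b \<longleftrightarrow> (b = a \<or> b = Mt e r a)"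
proof
  assume r: "r < CARD('n) - 1"
  assume h: "lab e r a = lab e r b"
  have "lab e r a = e a \<or> lab e r a = e (Mt e r a)" by (simp add: lab_def min_def)
  then obtain z where z: "z \<in> {a, Mt e r a}" "lab e r a = e z" by blast
  have "lab e r b = e b \<or> lab e r b = e (Mt e r b)" by (simp add: lab_def min_def)
  then obtain z' where z': "z' \<in> {b, Mt e r b}" "lab e r b = e z'" by blast
  have "z = z'" using z z' h e_inj by simp
  have inj: "Mt e r u = Mt e r v \<Longrightarrow> u = v" for u v by (metis Mt_invol[OF r])
  show "b = a \<or> b = Mt e r a" using \<open>z = z'\<close> z(1) z'(1) Mt_invol[OF r] by (auto dest: inj)
next
  assume r: "r < CARD('n) - 1" and "b = a \<or> b = Mt e r a"
  thus "lab e r a = lab e r b" using lab_Mt[OF r] by auto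
qed

end


context
  fixes e :: "'n::finite \<Rightarrow> nat"
  assumes eb: "bij_betw e UNIV {..<CARD('n)}" and evn: "even CARD('n)"
begin

lemma Z_avg:
  "(\<Sum>j<CARD('n). mmono (\<lambda>x. x) (\<lambda>x. ph CARD('n) j (e x) * 1) ** \<rho> ** cmat_adj (mmono (\<lambda>x. x) (\<lambda>x. ph CARD('n) j (e x) * 1))) $ a $ b
   = (if a = b then of_nat CARD('n) * \<rho> $ a $ a else 0)"
  using mono_avg[of "\<lambda>x. x" e "\<lambda>_. 1" \<rho> a b] e_lt[OF eb evn] e_inj[OF eb evn] by simp

lemma Z0: "mmono (\<lambda>x. x) (\<lambda>x. ph CARD('n) 0 (e x) * 1) ** \<rho> ** cmat_adj (mmono (\<lambda>x. x) (\<lambda>x. ph CARD('n) 0 (e x) * 1)) = \<rho>"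
  by (simp add: vec_eq_iff mono_conj ph_def)

lemma fam_entry:
  fixes \<sigma> :: "nat \<Rightarrow> 'n \<Rightarrow> complex" and s :: complex
  assumes s1: "\<And>r x. \<sigma> r x * cnj (\<sigma> r x) = 1"
    and s2: "\<And>r x. r < CARD('n) - 1 \<Longrightarrow> \<sigma> r (Mt e r x) * cnj (\<sigma> r x) = s"
  shows "(\<Sum>r<CARD('n) - 1. \<Sum>j<CARD('n). mmono (Mt e r) (\<lambda>x. ph CARD('n) j (lab e r x) * \<sigma> r x) ** \<rho> ** cmat_adj (mmono (Mt e r) (\<lambda>x. ph CARD('n) j (lab e r x) * \<sigma> r x))) $ a $ b
    = of_nat CARD('n) * (if a = b then (\<Sum>z\<in>UNIV - {a}. \<rho> $ z $ z) else s * \<rho> $ b $ a)"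
proof -
  let ?d = "of_nat CARD('n) :: complex"
  have inner: "(\<Sum>j<CARD('n). mmono (Mt e r) (\<lambda>x. ph CARD('n) j (lab e r x) * \<sigma> r x) ** \<rho> ** cmat_adj (mmono (Mt e r) (\<lambda>x. ph CARD('n) j (lab e r x) * \<sigma> r x))) $ a $ b
     = (if b = a \<or> b = Mt e r a then ?d * (\<sigma> r (Mt e r a) * \<rho> $ Mt e r a $ Mt e r b * cnj (\<sigma> r (Mt e r b))) else 0)"
    if r: "r < CARD('n) - 1" for r
  proof -
    have "(\<Sum>j<CARD('n). mmono (Mt e r) (\<lambda>x. ph CARD('n) j (lab e r x) * \<sigma> r x) ** \<rho> ** cmat_adj (mmono (Mt e r) (\<lambda>x. ph CARD('n) j (lab e r x) * \<sigma> r x))) $ a $ b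
      = (if lab e r (Mt e r a) = lab e r (Mt e r b) then ?d * (\<sigma> r (Mt e r a) * \<rho> $ Mt e r a $ Mt e r b * cnj (\<sigma> r (Mt e r b))) else 0)"
      by (rule mono_avg) (auto simp: Mt_invol[OF eb evn r] lab_lt[OF eb evn])
    also have "lab e r (Mt e r a) = lab e r (Mt e r b) \<longleftrightarrow> (b = a \<or> b = Mt e r a)"
      using lab_Mt[OF eb evn r, of a] lab_Mt[OF eb evn r, of b] lab_eq[OF eb evn r, of a b] by simp
    finally show ?thesis .
  qed
  have "(\<Sum>r<CARD('n) - 1. \<Sum>j<CARD('n). mmono (Mt e r) (\<lambda>x. ph CARD('n) j (lab e r x) * \<sigma> r x) ** \<rho> ** cmat_adj (mmono (Mt e r) (\<lambda>x. ph CARD('n) j (lab e r x) * \<sigma> r x))) $ a $ b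
    = (\<Sum>r<CARD('n) - 1. (if b = a \<or> b = Mt e r a then ?d * (\<sigma> r (Mt e r a) * \<rho> $ Mt e r a $ Mt e r b * cnj (\<sigma> r (Mt e r b))) else 0))"
    unfolding sum_component by (rule sum.cong[OF refl]) (simp add: inner[unfolded sum_component])
  also have "\<dots> = ?d * (if a = b then (\<Sum>z\<in>UNIV - {a}. \<rho> $ z $ z) else s * \<rho> $ b $ a)"
  proof (cases "a = b")
    case True
    have "(\<Sum>r<CARD('n) - 1. (if b = a \<or> b = Mt e r a then ?d * (\<sigma> r (Mt e r a) * \<rho> $ Mt e r a $ Mt e r b * cnj (\<sigma> r (Mt e r b))) else 0))
        = (\<Sum>r<CARD('n) - 1. ?d * (\<lambda>z. \<rho> $ z $ z) (Mt e r a))"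
      using True by (intro sum.cong refl) (simp add: mult_ac s1)
    also have "\<dots> = ?d * (\<Sum>z\<in>UNIV - {a}. \<rho> $ z $ z)"
      using sum_Mt[OF eb evn, of "\<lambda>z. \<rho> $ z $ z" a] by (simp add: sum_distrib_left[symmetric])
    finally show ?thesis using True by simp
  next
    case False
    have "(\<Sum>r<CARD('n) - 1. (if b = a \<or> b = Mt e r a then ?d * (\<sigma> r (Mt e r a) * \<rho> $ Mt e r a $ Mt e r b * cnj (\<sigma> r (Mt e r b))) else 0))
        = (\<Sum>r<CARD('n) - 1. (\<lambda>z. if z = b then ?d * (s * \<rho> $ b $ a) else 0) (Mt e r a))"
    proof (intro sum.cong refl)
      fix r assume "r \<in> {..<CARD('n) - 1}"
      hence r: "r < CARD('n) - 1" by simp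
      show "(if b = a \<or> b = Mt e r a then ?d * (\<sigma> r (Mt e r a) * \<rho> $ Mt e r a $ Mt e r b * cnj (\<sigma> r (Mt e r b))) else 0)
          = (\<lambda>z. if z = b then ?d * (s * \<rho> $ b $ a) else 0) (Mt e r a)"
      proof (cases "b = Mt e r a")
        case True
        hence "Mt e r b = a" using Mt_invol[OF eb evn r] by simp
        moreover have "\<sigma> r b * cnj (\<sigma> r a) = s" using s2[OF r, of a] True by simp
        ultimately show ?thesis using True
          by (simp add: mult_ac)
      next
        case False
        then show ?thesis using \<open>a \<noteq> b\<close> by auto
      qed
    qed
    also have "\<dots> = (\<Sum>z\<in>UNIV - {a}. if z = b then ?d * (s * \<rho> $ b $ a) else 0)"
      by (rule sum_Mt[OF eb evn])
    also have "\<dots> = ?d * (s * \<rho> $ b $ a)" using False by simp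
    finally show ?thesis using False by simp
  qed
  finally show ?thesis .
qed

end


definition Em :: "'n::finite \<Rightarrow> 'n \<Rightarrow> complex^'n^'n" where
  "Em i j = (\<chi> a b. if a = i \<and> b = j then 1 else 0)"

definition sw :: "'a \<Rightarrow> 'a \<Rightarrow> 'a \<Rightarrow> 'a" where
  "sw u v x = (if x = u then v else if x = v then u else x)"

lemma sw_invol: "sw u v (sw u v x) = x" by (simp add: sw_def)

lemma Em_entry[simp]: "Em i j $ a $ b = (if a = i \<and> b = j then 1 else 0)" by (simp add: Em_def)

lemma cmat_scale_entry[simp]: "cmat_scale c A $ a $ b = c * A $ a $ b" by (simp add: cmat_scale_def)

lemma mat_decomp: "\<rho> = (\<Sum>i\<in>UNIV. \<Sum>j\<in>UNIV. cmat_scale (\<rho> $ i $ j) (Em i j))"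
proof -
  have "(\<Sum>i\<in>UNIV. \<Sum>j\<in>UNIV. cmat_scale (\<rho> $ i $ j) (Em i j)) $ a $ b = \<rho> $ a $ b" for a b
  proof -
    have "(\<Sum>i\<in>UNIV. \<Sum>j\<in>UNIV. cmat_scale (\<rho> $ i $ j) (Em i j)) $ a $ b
        = (\<Sum>i\<in>UNIV. \<Sum>j\<in>UNIV. if j = b then (if i = a then \<rho> $ i $ j else 0) else 0)"
      unfolding sum_component cmat_scale_entry Em_entry by (intro sum.cong refl) auto
    also have "\<dots> = \<rho> $ a $ b" by simp
    finally show ?thesis .
  qed
  thus ?thesis by (simp add: vec_eq_iff)
qed

lemma mono_Em:
  assumes inv: "\<And>x. m (m x) = x"
  shows "mmono m \<psi> ** Em i j ** cmat_adj (mmono m \<psi>) = cmat_scale (\<psi> i * cnj (\<psi> j)) (Em (m i) (m j))"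
proof -
  have "(mmono m \<psi> ** Em i j ** cmat_adj (mmono m \<psi>)) $ a $ b = cmat_scale (\<psi> i * cnj (\<psi> j)) (Em (m i) (m j)) $ a $ b" for a b
    unfolding mono_conj[OF inv] by (auto simp: invol_eq[OF inv] inv)
  thus ?thesis by (simp add: vec_eq_iff)
qed

lemma mono_real_orth:
  assumes inv: "\<And>x. m (m x) = x" and ps: "\<And>x. \<psi> x = 1 \<or> \<psi> x = -1"
  shows "real_orthogonal (mmono m \<psi>)" "transpose (mmono m \<psi>) = cmat_adj (mmono m \<psi>)"
proof -
  have c: "cnj (\<psi> x) = \<psi> x" for x using ps[of x] by auto
  show tr: "transpose (mmono m \<psi>) = cmat_adj (mmono m \<psi>)"
    by (simp add: vec_eq_iff transpose_def cmat_adj_def mmono_def c)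
  have u: "cunitary (mmono m \<psi>)" by (rule mono_unitary[OF inv]) (metis ps norm_one norm_minus_cancel)
  have im: "Im (\<psi> x) = 0" for x using ps[of x] by auto
  show "real_orthogonal (mmono m \<psi>)"
    unfolding real_orthogonal_def tr using u by (auto simp: cunitary_def mmono_def im)
qed

context
  fixes T :: "complex^'n::finite^'n \<Rightarrow> complex^'n^'n"
  assumes lin: "clinear_map T"
    and cov: "\<And>\<rho> Q. real_orthogonal Q \<Longrightarrow> T (Q ** \<rho> ** transpose Q) = Q ** T \<rho> ** transpose Q"
begin

lemma T_add: "T (A + B) = T A + T B" using lin by (simp add: clinear_map_def)
lemma T_scale: "T (cmat_scale c A) = cmat_scale c (T A)" using lin by (simp add: clinear_map_def)
lemma T_zero: "T 0 = 0" using T_add[of 0 0] by simp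
lemma T_sum: "finite S \<Longrightarrow> T (\<Sum>x\<in>S. f x) = (\<Sum>x\<in>S. T (f x))"
  by (induction S rule: finite_induct) (simp_all add: T_zero T_add)

lemma T_entry: "T \<rho> $ p $ q = (\<Sum>i\<in>UNIV. \<Sum>j\<in>UNIV. \<rho> $ i $ j * T (Em i j) $ p $ q)"
proof -
  have "T \<rho> = T (\<Sum>i\<in>UNIV. \<Sum>j\<in>UNIV. cmat_scale (\<rho> $ i $ j) (Em i j))" by (rule arg_cong[where f=T, OF mat_decomp])
  also have "\<dots> = (\<Sum>i\<in>UNIV. \<Sum>j\<in>UNIV. cmat_scale (\<rho> $ i $ j) (T (Em i j)))"
    by (simp add: T_sum T_scale)
  finally show ?thesis by (simp add: sum_component)
qed

lemma cov_mono:
  assumes inv: "\<And>x. m (m x) = x" and ps: "\<And>x. \<psi> x = 1 \<or> \<psi> x = -1"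
  shows "(\<psi> i * cnj (\<psi> j)) * T (Em (m i) (m j)) $ a $ b = \<psi> (m a) * T (Em i j) $ m a $ m b * cnj (\<psi> (m b))"
proof -
  have "T (mmono m \<psi> ** Em i j ** transpose (mmono m \<psi>)) = mmono m \<psi> ** T (Em i j) ** transpose (mmono m \<psi>)"
    by (rule cov[OF mono_real_orth(1)[OF inv ps]])
  hence "T (cmat_scale (\<psi> i * cnj (\<psi> j)) (Em (m i) (m j))) = mmono m \<psi> ** T (Em i j) ** cmat_adj (mmono m \<psi>)"
    unfolding mono_real_orth(2)[OF inv ps] mono_Em[OF inv] .
  hence "cmat_scale (\<psi> i * cnj (\<psi> j)) (T (Em (m i) (m j))) $ a $ b = (mmono m \<psi> ** T (Em i j) ** cmat_adj (mmono m \<psi>)) $ a $ b"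
    by (simp add: T_scale)
  thus ?thesis unfolding mono_conj[OF inv] by simp
qed

lemma sign_rel:
  "T (Em i j) $ a $ b * ((if i = k then -1 else 1) * (if j = k then -1 else 1))
   = (if a = k then -1 else 1) * T (Em i j) $ a $ b * (if b = k then -1 else 1)"
proof -
  have ps: "\<And>x. (if x = k then -1 else 1) = (1::complex) \<or> (if x = k then -1 else 1) = -1" by auto
  have cj: "cnj (if P then -1 else 1) = (if P then -1 else (1::complex))" for P by simp
  show ?thesis
    using cov_mono[of "\<lambda>x. x" "\<lambda>x. if x = k then -1 else (1::complex)", OF _ ps, of i j a b]
    unfolding cj by (simp add: mult.commute)
qed

lemma support:
  assumes nz: "T (Em i j) $ a $ b \<noteq> 0"
  shows "i \<noteq> j \<Longrightarrow> (a = i \<and> b = j) \<or> (a = j \<and> b = i)" "i = j \<Longrightarrow> a = b"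
proof -
  have s0: "((if i = k then -1 else 1) * (if j = k then -1 else 1) :: complex) = (if a = k then -1 else 1) * (if b = k then -1 else 1)" for k
    using sign_rel[where i=i and j=j and k=k and a=a and b=b] nz by (simp add: mult_ac)
  have sp: "((if P then -1 else 1) * (if Q then -1 else 1) :: complex) = (if P = Q then 1 else -1)" for P Q by auto
  have s: "((i = k) = (j = k)) = ((a = k) = (b = k))" for k
    using s0[of k] unfolding sp by (auto split: if_splits)
  show "i \<noteq> j \<Longrightarrow> (a = i \<and> b = j) \<or> (a = j \<and> b = i)"
    using s[of i] s[of j] by blast
  show "i = j \<Longrightarrow> a = b"
    using s[of a] by blast
qed

lemma swap_rel: "T (Em (sw u v i) (sw u v j)) $ a $ b = T (Em i j) $ sw u v a $ sw u v b"
  using cov_mono[of "sw u v" "\<lambda>_. 1", OF sw_invol, of i j a b] by simp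

end

lemma const2:
  fixes G :: "'a \<Rightarrow> 'a \<Rightarrow> 'b"
  assumes inv: "\<And>u v x y. G (sw u v x) (sw u v y) = G x y"
    and "x \<noteq> y" "x' \<noteq> y'"
  shows "G x y = G x' y'"
proof -
  let ?y1 = "sw x x' y"
  have "G x y = G (sw x x' x) ?y1" by (rule inv[symmetric])
  also have "sw x x' x = x'" by (simp add: sw_def)
  also have "G x' ?y1 = G (sw ?y1 y' x') (sw ?y1 y' ?y1)" by (rule inv[symmetric])
  also have "sw ?y1 y' x' = x'" using assms(2,3) by (auto simp: sw_def)
  also have "sw ?y1 y' ?y1 = y'" by (simp add: sw_def)
  finally show ?thesis .
qed

lemma const1:
  fixes G :: "'a \<Rightarrow> 'b"
  assumes inv: "\<And>u v x. G (sw u v x) = G x"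
  shows "G x = G x'"
proof -
  have "G x = G (sw x x' x)" by (rule inv[symmetric])
  also have "sw x x' x = x'" by (simp add: sw_def)
  finally show ?thesis .
qed


context
  fixes T :: "complex^'n::finite^'n \<Rightarrow> complex^'n^'n"
  assumes lin: "clinear_map T"
    and cov: "\<And>\<rho> Q. real_orthogonal Q \<Longrightarrow> T (Q ** \<rho> ** transpose Q) = Q ** T \<rho> ** transpose Q"
begin

lemma swap_rel': "T (Em (sw u v x) (sw u v y)) $ sw u v p $ sw u v q = T (Em x y) $ p $ q"
  using swap_rel[OF lin cov, of u v x y "sw u v p" "sw u v q"] by (simp add: sw_invol)

lemma charact:
  assumes ij0: "i0 \<noteq> j0"
  shows "T (Em i j) $ p $ q = (if i \<noteq> j then (if p = i \<and> q = j then T (Em i0 j0) $ i0 $ j0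
            else if p = j \<and> q = i then T (Em i0 j0) $ j0 $ i0 else 0)
          else (if p \<noteq> q then 0 else if p = i then T (Em i0 i0) $ i0 $ i0 else T (Em i0 i0) $ j0 $ j0))"
proof (cases "i = j")
  case False
  show ?thesis
  proof (cases "p = i \<and> q = j")
    case True
    have "T (Em i j) $ i $ j = T (Em i0 j0) $ i0 $ j0"
      using const2[where G = "\<lambda>x y. T (Em x y) $ x $ y", OF swap_rel' False ij0] .
    then show ?thesis using True False by simp
  next
    case nt: False
    show ?thesis
    proof (cases "p = j \<and> q = i")
      case True
      have "T (Em i j) $ j $ i = T (Em i0 j0) $ j0 $ i0"
        using const2[where G = "\<lambda>x y. T (Em x y) $ y $ x", OF swap_rel' False ij0] .
      then show ?thesis using True False by auto
    next
      case False
      then show ?thesis using nt \<open>i \<noteq> j\<close> support(1)[OF lin cov, of i j p q] by auto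
    qed
  qed
next
  case True
  show ?thesis
  proof (cases "p = q")
    case False
    then show ?thesis using True support(2)[OF lin cov, of i j p q] by auto
  next
    case pq: True
    show ?thesis
    proof (cases "p = i")
      case True
      have "T (Em i i) $ i $ i = T (Em i0 i0) $ i0 $ i0"
        using const1[where G = "\<lambda>x. T (Em x x) $ x $ x", OF swap_rel'] .
      then show ?thesis using True pq \<open>i = j\<close> by simp
    next
      case False
      have "T (Em i i) $ p $ p = T (Em i0 i0) $ j0 $ j0"
        using const2[where G = "\<lambda>x y. T (Em x x) $ y $ y", OF swap_rel', of i p i0 j0] False ij0 by auto
      then show ?thesis using False pq \<open>i = j\<close> by auto
    qed
  qed
qed

lemma T_formula:
  assumes ij0: "i0 \<noteq> j0"
  shows "T \<rho> $ p $ q = (if p = q then T (Em i0 i0) $ i0 $ i0 * \<rho> $ p $ p + T (Em i0 i0) $ j0 $ j0 * (\<Sum>z\<in>UNIV - {p}. \<rho> $ z $ z)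
      else T (Em i0 j0) $ i0 $ j0 * \<rho> $ p $ q + T (Em i0 j0) $ j0 $ i0 * \<rho> $ q $ p)"
proof -
  let ?A = "T (Em i0 j0) $ i0 $ j0" and ?B = "T (Em i0 j0) $ j0 $ i0"
    and ?C0 = "T (Em i0 i0) $ i0 $ i0" and ?C1 = "T (Em i0 i0) $ j0 $ j0"
  have "T \<rho> $ p $ q = (\<Sum>i\<in>UNIV. \<Sum>j\<in>UNIV. \<rho> $ i $ j * T (Em i j) $ p $ q)"
    by (rule T_entry[OF lin cov])
  also have "\<dots> = (if p = q then ?C0 * \<rho> $ p $ p + ?C1 * (\<Sum>z\<in>UNIV - {p}. \<rho> $ z $ z)
      else ?A * \<rho> $ p $ q + ?B * \<rho> $ q $ p)"
  proof (cases "p = q")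
    case False
    have "(\<Sum>i\<in>UNIV. \<Sum>j\<in>UNIV. \<rho> $ i $ j * T (Em i j) $ p $ q)
        = (\<Sum>i\<in>UNIV. (\<Sum>j\<in>UNIV. if j = q then (if i = p then ?A * \<rho> $ i $ j else 0) else 0)
             + (\<Sum>j\<in>UNIV. if j = p then (if i = q then ?B * \<rho> $ i $ j else 0) else 0))"
      unfolding sum.distrib[symmetric]
    proof (intro sum.cong refl)
      fix i j
      show "\<rho> $ i $ j * T (Em i j) $ p $ q = (if j = q then (if i = p then ?A * \<rho> $ i $ j else 0) else 0)
             + (if j = p then (if i = q then ?B * \<rho> $ i $ j else 0) else 0)"
        unfolding charact[OF ij0, of i j p q] using False by auto
    qed
    also have "\<dots> = (\<Sum>i\<in>UNIV. (if i = p then ?A * \<rho> $ i $ q else 0) + (if i = q then ?B * \<rho> $ i $ p else 0))"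
      by (intro sum.cong refl) (simp add: if_distrib)
    also have "\<dots> = ?A * \<rho> $ p $ q + ?B * \<rho> $ q $ p" by (simp add: sum.distrib)
    finally show ?thesis using False by simp
  next
    case True
    have "(\<Sum>i\<in>UNIV. \<Sum>j\<in>UNIV. \<rho> $ i $ j * T (Em i j) $ p $ q)
        = (\<Sum>i\<in>UNIV. \<Sum>j\<in>UNIV. if j = i then (if i = p then ?C0 else ?C1) * \<rho> $ i $ i else 0)"
    proof (intro sum.cong refl)
      fix i j
      show "\<rho> $ i $ j * T (Em i j) $ p $ q = (if j = i then (if i = p then ?C0 else ?C1) * \<rho> $ i $ i else 0)"
        unfolding charact[OF ij0, of i j p q] using True by auto
    qed
    also have "\<dots> = (\<Sum>i\<in>UNIV. (if i = p then ?C0 else ?C1) * \<rho> $ i $ i)"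
      by (intro sum.cong refl) simp
    also have "\<dots> = ?C0 * \<rho> $ p $ p + (\<Sum>i\<in>UNIV - {p}. (if i = p then ?C0 else ?C1) * \<rho> $ i $ i)"
      by (subst sum.remove[of UNIV p]) simp_all
    also have "(\<Sum>i\<in>UNIV - {p}. (if i = p then ?C0 else ?C1) * \<rho> $ i $ i) = (\<Sum>i\<in>UNIV - {p}. ?C1 * \<rho> $ i $ i)"
      by (rule sum.cong) auto
    also have "\<dots> = ?C1 * (\<Sum>z\<in>UNIV - {p}. \<rho> $ z $ z)"
      by (simp add: sum_distrib_left)
    finally show ?thesis using True by simp
  qed
  finally show ?thesis .
qed

end


lemma Em_mv: "(Em a b *v x) $ c = (if c = a then x $ b else 0)"
proof -
  have "(Em a b *v x) $ c = (\<Sum>y\<in>UNIV. (if c = a \<and> y = b then 1 else 0) * x $ y)"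
    by (simp add: matrix_vector_mult_def)
  also have "\<dots> = (\<Sum>y\<in>UNIV. if y = b then (if c = a then x $ b else 0) else 0)"
    by (intro sum.cong refl) auto
  also have "\<dots> = (if c = a then x $ b else 0)" by simp
  finally show ?thesis .
qed

lemma cinner_Em: "cinner w (Em a b *v x) = cnj (w $ a) * x $ b"
proof -
  have "cinner w (Em a b *v x) = (\<Sum>c\<in>UNIV. if c = a then cnj (w $ c) * x $ b else 0)"
    unfolding cinner_def Em_mv by (intro sum.cong refl) auto
  also have "\<dots> = cnj (w $ a) * x $ b" by simp
  finally show ?thesis .
qed

lemma nonneg_cnj: "0 \<le> cnj S * (S::complex)"
proof -
  have "cnj S * S = complex_of_real ((cmod S)\<^sup>2)" using complex_norm_square[of S] by (simp add: mult.commute)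
  thus ?thesis by (simp add: less_eq_complex_def)
qed

lemma block_Em: "block_psd k (\<lambda>i j. Em (u i) (u j) :: complex^'n::finite^'n)"
  unfolding block_psd_def
proof
  fix v :: "nat \<Rightarrow> complex^'n"
  have "(\<Sum>i<k. \<Sum>j<k. cinner (v i) (Em (u i) (u j) *v v j)) = (\<Sum>i<k. \<Sum>j<k. cnj (v i $ u i) * v j $ u j)"
    by (simp add: cinner_Em)
  also have "\<dots> = (\<Sum>i<k. cnj (v i $ u i)) * (\<Sum>j<k. v j $ u j)" by (simp add: sum_product)
  also have "(\<Sum>i<k. cnj (v i $ u i)) = cnj (\<Sum>j<k. v j $ u j)" by simp
  finally have eq: "(\<Sum>i<k. \<Sum>j<k. cinner (v i) (Em (u i) (u j) *v v j)) = cnj (\<Sum>j<k. v j $ u j) * (\<Sum>j<k. v j $ u j)" .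
  show "0 \<le> (\<Sum>i<k. \<Sum>j<k. cinner (v i) (Em (u i) (u j) *v v j))" unfolding eq by (rule nonneg_cnj)
qed

lemma cinner_test: "cinner (\<chi> a. if a = t1 then w1 else 0) (X *v (\<chi> a. if a = t2 then w2 else 0)) = cnj w1 * X $ t1 $ t2 * w2"
proof -
  have mv: "(X *v (\<chi> a. if a = t2 then w2 else 0)) $ c = X $ c $ t2 * w2" for c
  proof -
    have "(X *v (\<chi> a. if a = t2 then w2 else 0)) $ c = (\<Sum>y\<in>UNIV. X $ c $ y * (if y = t2 then w2 else 0))"
      by (simp add: matrix_vector_mult_def)
    also have "\<dots> = (\<Sum>y\<in>UNIV. if y = t2 then X $ c $ t2 * w2 else 0)"
      by (intro sum.cong refl) auto
    also have "\<dots> = X $ c $ t2 * w2" by simp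
    finally show ?thesis .
  qed
  have "cinner (\<chi> a. if a = t1 then w1 else 0) (X *v (\<chi> a. if a = t2 then w2 else 0))
      = (\<Sum>c\<in>UNIV. if c = t1 then cnj w1 * X $ t1 $ t2 * w2 else 0)"
    unfolding cinner_def mv by (intro sum.cong refl) auto
  also have "\<dots> = cnj w1 * X $ t1 $ t2 * w2" by simp
  finally show ?thesis .
qed

lemma cp_test:
  fixes T :: "complex^'n::finite^'n \<Rightarrow> complex^'n^'n" and k :: nat and u t :: "nat \<Rightarrow> 'n" and w :: "nat \<Rightarrow> complex"
  assumes "completely_positive T"
  shows "0 \<le> (\<Sum>i<k. \<Sum>j<k. cnj (w i) * T (Em (u i) (u j)) $ t i $ t j * w j)"
proof -
  have "block_psd k (\<lambda>i j. T (Em (u i) (u j)))"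
    using assms block_Em unfolding completely_positive_def by blast
  from this[unfolded block_psd_def, rule_format, of "\<lambda>i. (\<chi> a. if a = t i then w i else 0)"]
  have "0 \<le> (\<Sum>i<k. \<Sum>j<k. cinner (\<chi> a. if a = t i then w i else 0) (T (Em (u i) (u j)) *v (\<chi> a. if a = t j then w j else 0)))" .
  thus ?thesis by (simp add: cinner_test)
qed


theorem theorem4:
  fixes T :: "complex^'n^'n \<Rightarrow> complex^'n^'n"
  assumes "even CARD('n)"
    and "quantum_channel T"
    and "\<And>\<rho> Q. real_orthogonal Q \<Longrightarrow> T (Q ** \<rho> ** transpose Q) = Q ** T \<rho> ** transpose Q"
  shows "\<exists>m (p :: nat \<Rightarrow> real) U. (\<forall>i<m. 0 \<le> p i \<and> cunitary (U i)) \<and> (\<Sum>i<m. p i) = 1 \<and>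
           (\<forall>\<rho>. T \<rho> = (\<Sum>i<m. cmat_scale (complex_of_real (p i)) (U i ** \<rho> ** cmat_adj (U i))))"
proof -
  note evn = assms(1)
  note cov = assms(3)
  have lin: "clinear_map T" and cp: "completely_positive T" and tp: "trace_preserving T"
    using assms(2) by (auto simp: quantum_channel_def)
  obtain e :: "'n \<Rightarrow> nat" where eb: "bij_betw e UNIV {..<CARD('n)}"
    using ex_bij_betw_finite_nat[of "UNIV :: 'n set"] by (auto simp: atLeast0LessThan)
  let ?d = "CARD('n)"
  have d2: "2 \<le> ?d" by (rule d2[OF eb evn])
  let ?ei = "inv_into UNIV e"
  define i0 where "i0 = ?ei 0"
  define j0 where "j0 = ?ei 1"
  have ij0: "i0 \<noteq> j0"
  proof
    assume "i0 = j0"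
    hence "e i0 = e j0" by simp
    thus False unfolding i0_def j0_def using e_ei[OF eb evn, of 0] e_ei[OF eb evn, of 1] d2 by simp
  qed
  let ?A = "T (Em i0 j0) $ i0 $ j0" and ?B = "T (Em i0 j0) $ j0 $ i0"
    and ?C0 = "T (Em i0 i0) $ i0 $ i0" and ?C1 = "T (Em i0 i0) $ j0 $ j0"
  note ch = charact[OF lin cov ij0]
  have f1: "T (Em j0 i0) $ j0 $ i0 = ?A" using ch[of j0 i0 j0 i0] ij0 by simp
  have f2: "T (Em j0 j0) $ j0 $ j0 = ?C0" using ch[of j0 j0 j0 j0] ij0 by simp
  have f3: "T (Em j0 j0) $ i0 $ i0 = ?C1" using ch[of j0 j0 i0 i0] ij0 by simp
  have f4: "T (Em j0 i0) $ i0 $ j0 = ?B" using ch[of j0 i0 i0 j0] ij0 by simp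

  have tA: "0 \<le> 2 * ?C0 - 2 * ?A"
    using cp_test[OF cp, where k="Suc (Suc 0)" and w="\<lambda>i. if i = 0 then 1 else -1" and u="\<lambda>i. if i = 0 then i0 else j0" and t="\<lambda>i. if i = 0 then i0 else j0"]
    by (simp add: f1 f2)
  have tC: "0 \<le> 2 * ?C1 + 2 * s * ?B" if s: "s = 1 \<or> s = -1" for s :: complex
  proof -
    have cs: "cnj s = s" "cnj s * s = 1" "s * (s * x) = x" for x using s by auto
    show ?thesis
      using cp_test[OF cp, where k="Suc (Suc 0)" and w="\<lambda>i. if i = 0 then 1 else s" and u="\<lambda>i. if i = 0 then i0 else j0" and t="\<lambda>i. if i = 0 then j0 else i0"]
      by (simp add: f3 f4 cs algebra_simps)
  qed
  have inner: "(\<Sum>y\<in>UNIV. T (Em x y) $ x $ y) = ?C0 + of_nat (?d - 1) * ?A" for x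
  proof -
    have "(\<Sum>y\<in>UNIV. T (Em x y) $ x $ y) = T (Em x x) $ x $ x + (\<Sum>y\<in>UNIV - {x}. T (Em x y) $ x $ y)"
      by (simp add: sum.remove)
    also have "(\<Sum>y\<in>UNIV - {x}. T (Em x y) $ x $ y) = (\<Sum>y\<in>UNIV - {x}. ?A)"
      by (rule sum.cong) (auto simp: ch[of x _ x])
    also have "T (Em x x) $ x $ x = ?C0" by (simp add: ch[of x x x x])
    finally show ?thesis by simp
  qed
  have tB: "0 \<le> of_nat ?d * (?C0 + of_nat (?d - 1) * ?A)"
  proof -
    have "0 \<le> (\<Sum>i<?d. \<Sum>j<?d. cnj 1 * T (Em (?ei i) (?ei j)) $ ?ei i $ ?ei j * 1)"
      by (rule cp_test[OF cp])
    also have "(\<Sum>i<?d. \<Sum>j<?d. cnj 1 * T (Em (?ei i) (?ei j)) $ ?ei i $ ?ei j * 1)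
        = (\<Sum>i<?d. (\<lambda>x. \<Sum>j<?d. (\<lambda>y. T (Em x y) $ x $ y) (?ei j)) (?ei i))" by simp
    also have "\<dots> = (\<Sum>x\<in>UNIV. \<Sum>j<?d. (\<lambda>y. T (Em x y) $ x $ y) (?ei j))"
      by (rule sum.reindex_bij_betw[OF bij_betw_inv_into[OF eb]])
    also have "\<dots> = (\<Sum>x\<in>UNIV. \<Sum>y\<in>UNIV. T (Em x y) $ x $ y)"
      by (intro sum.cong refl sum.reindex_bij_betw[OF bij_betw_inv_into[OF eb]])
    also have "\<dots> = of_nat ?d * (?C0 + of_nat (?d - 1) * ?A)" by (simp add: inner)
    finally show ?thesis .
  qed
  have tr1: "?C0 + of_nat (?d - 1) * ?C1 = 1"
  proof -
    have "trace (T (Em i0 i0)) = trace (Em i0 i0 :: complex^'n^'n)" using tp by (simp add: trace_preserving_def)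
    also have "trace (Em i0 i0 :: complex^'n^'n) = 1" by (simp add: trace_def)
    also have "trace (T (Em i0 i0)) = ?C0 + (\<Sum>p\<in>UNIV - {i0}. T (Em i0 i0) $ p $ p)"
      by (simp add: trace_def sum.remove)
    also have "(\<Sum>p\<in>UNIV - {i0}. T (Em i0 i0) $ p $ p) = (\<Sum>p\<in>UNIV - {i0}. ?C1)"
      by (rule sum.cong) (auto simp: ch[of i0 i0])
    finally show ?thesis by simp
  qed
  have dpos: "0 < real ?d" using d2 by simp
  have dm1: "real (?d - 1) = real ?d - 1" using d2 by (simp add: of_nat_diff)
  have tA': "Re ?A \<le> Re ?C0" "Im ?C0 = Im ?A" using tA by (auto simp: less_eq_complex_def)
  have tCp: "0 \<le> Re ?C1 + Re ?B" "Im ?C1 + Im ?B = 0" using tC[of 1] by (auto simp: less_eq_complex_def)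
  have tCm: "0 \<le> Re ?C1 - Re ?B" "Im ?C1 - Im ?B = 0" using tC[of "-1"] by (auto simp: less_eq_complex_def)
  have tB': "0 \<le> real ?d * (Re ?C0 + real (?d - 1) * Re ?A)" "real ?d * (Im ?C0 + real (?d - 1) * Im ?A) = 0"
    using tB by (auto simp: less_eq_complex_def)
  have ImB: "Im ?B = 0" and ImC1: "Im ?C1 = 0" using tCp tCm by linarith+
  have "Im ?C0 + real (?d - 1) * Im ?A = 0" using tB'(2) dpos by simp
  hence "real ?d * Im ?A = 0" using tA'(2) dm1 by (simp add: algebra_simps)
  hence ImA: "Im ?A = 0" using dpos by simp
  have ImC0: "Im ?C0 = 0" using ImA tA'(2) by simp
  define a where "a = Re ?A"
  define b where "b = Re ?B"
  define c0 where "c0 = Re ?C0"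
  define c1 where "c1 = Re ?C1"
  have Aa: "?A = complex_of_real a" using ImA by (simp add: a_def complex_eq_iff)
  have Bb: "?B = complex_of_real b" using ImB by (simp add: b_def complex_eq_iff)
  have C0c: "?C0 = complex_of_real c0" using ImC0 by (simp add: c0_def complex_eq_iff)
  have C1c: "?C1 = complex_of_real c1" using ImC1 by (simp add: c1_def complex_eq_iff)
  have ineq: "a \<le> c0" "0 \<le> c0 + (real ?d - 1) * a" "0 \<le> c1 + b" "0 \<le> c1 - b"
    using tA'(1) tCp(1) tCm(1) tB'(1) dpos dm1 unfolding a_def b_def c0_def c1_def
    by (auto simp: zero_le_mult_iff)
  have trr: "c0 + (real ?d - 1) * c1 = 1"
  proof -
    have "Re (?C0 + of_nat (?d - 1) * ?C1) = 1" using tr1 by simp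
    thus ?thesis using dm1 ImC1 unfolding c0_def c1_def by simp
  qed
  define Zu where "Zu j = mmono (\<lambda>x. x) (\<lambda>x. ph ?d j (e x) * 1)" for j
  define Pu where "Pu = (\<lambda>(r, j). mmono (Mt e r) (\<lambda>x. ph ?d j (lab e r x) * 1))"
  define Nu where "Nu = (\<lambda>(r, j). mmono (Mt e r) (\<lambda>x. ph ?d j (lab e r x) * sgm e r x))"
  define pZ where "pZ j = (c0 - a) / real ?d + (if j = 0 then a else 0)" for j :: nat
  define wP where "wP = (c1 + b) / (2 * real ?d)"
  define wN where "wN = (c1 - b) / (2 * real ?d)"
  define S where "S = {..<?d - 1} \<times> {..<?d}"
  have MZ: "MUw (\<Sum>j<?d. pZ j) (\<lambda>\<rho>. \<Sum>j<?d. cmat_scale (complex_of_real (pZ j)) (Zu j ** \<rho> ** cmat_adj (Zu j)))"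
  proof (rule MUw_family[OF finite_lessThan])
    fix j assume "j \<in> {..<?d}"
    have "0 \<le> pZ j"
    proof (cases "j = 0")
      case True
      have "0 \<le> (c0 + (real ?d - 1) * a) / real ?d" using ineq dpos by simp
      also have "(c0 + (real ?d - 1) * a) / real ?d = pZ j" using True dpos by (simp add: pZ_def field_simps)
      finally show ?thesis .
    qed (use ineq dpos in \<open>simp add: pZ_def\<close>)
    moreover have "cunitary (Zu j)" unfolding Zu_def by (rule mono_unitary) simp_all
    ultimately show "0 \<le> pZ j \<and> cunitary (Zu j)" by simp
  qed simp_all
  have MP: "MUw (\<Sum>x\<in>S. wP) (\<lambda>\<rho>. \<Sum>x\<in>S. cmat_scale (complex_of_real wP) (Pu x ** \<rho> ** cmat_adj (Pu x)))"
  proof (rule MUw_family)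
    fix x assume "x \<in> S"
    then obtain r j where x: "x = (r, j)" and r: "r < ?d - 1" by (auto simp: S_def)
    have "cunitary (Pu x)" unfolding x Pu_def by (simp, rule mono_unitary) (simp_all add: Mt_invol[OF eb evn r])
    thus "0 \<le> wP \<and> cunitary (Pu x)" using ineq dpos by (simp add: wP_def)
  qed (simp_all add: S_def)
  have MN: "MUw (\<Sum>x\<in>S. wN) (\<lambda>\<rho>. \<Sum>x\<in>S. cmat_scale (complex_of_real wN) (Nu x ** \<rho> ** cmat_adj (Nu x)))"
  proof (rule MUw_family)
    fix x assume "x \<in> S"
    then obtain r j where x: "x = (r, j)" and r: "r < ?d - 1" by (auto simp: S_def)
    have "cunitary (Nu x)" unfolding x Nu_def by (simp, rule mono_unitary) (simp_all add: Mt_invol[OF eb evn r] sgm_def)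
    thus "0 \<le> wN \<and> cunitary (Nu x)" using ineq dpos by (simp add: wN_def)
  qed (simp_all add: S_def)
  have M: "MUw ((\<Sum>j<?d. pZ j) + (\<Sum>x\<in>S. wP) + (\<Sum>x\<in>S. wN))
     (\<lambda>\<rho>. (\<Sum>j<?d. cmat_scale (complex_of_real (pZ j)) (Zu j ** \<rho> ** cmat_adj (Zu j)))
        + (\<Sum>x\<in>S. cmat_scale (complex_of_real wP) (Pu x ** \<rho> ** cmat_adj (Pu x)))
        + (\<Sum>x\<in>S. cmat_scale (complex_of_real wN) (Nu x ** \<rho> ** cmat_adj (Nu x))))"
    by (rule MUw_add[OF MUw_add[OF MZ MP] MN])
  have "MUw 1 T"
  proof (rule MUw_cong[OF M])
    have w1: "(\<Sum>j<?d. pZ j) = c0" using dpos by (simp add: pZ_def sum.distrib)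
    have w2: "(\<Sum>x\<in>S. wP) = (real ?d - 1) * (c1 + b) / 2" using dpos dm1 d2
      by (simp add: S_def wP_def card_cartesian_product of_nat_diff field_simps)
    have w3: "(\<Sum>x\<in>S. wN) = (real ?d - 1) * (c1 - b) / 2" using dpos dm1 d2
      by (simp add: S_def wN_def card_cartesian_product of_nat_diff field_simps)
    show "(\<Sum>j<?d. pZ j) + (\<Sum>x\<in>S. wP) + (\<Sum>x\<in>S. wN) = 1"
      unfolding w1 w2 w3 using trr by (simp add: field_simps)
    fix \<rho>
    show "(\<Sum>j<?d. cmat_scale (complex_of_real (pZ j)) (Zu j ** \<rho> ** cmat_adj (Zu j)))
        + (\<Sum>x\<in>S. cmat_scale (complex_of_real wP) (Pu x ** \<rho> ** cmat_adj (Pu x)))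
        + (\<Sum>x\<in>S. cmat_scale (complex_of_real wN) (Nu x ** \<rho> ** cmat_adj (Nu x))) = T \<rho>"
    proof -
      have hZ: "complex_of_real ((c0 - a) / real ?d) * of_nat ?d = of_real (c0 - a)"
      proof -
        have "(c0 - a) / real ?d * real ?d = c0 - a" using dpos by simp
        hence "complex_of_real ((c0 - a) / real ?d * real ?d) = of_real (c0 - a)" by simp
        thus ?thesis by (simp only: of_real_mult of_real_of_nat_eq)
      qed
      have hP: "complex_of_real wP * of_nat ?d = of_real ((c1 + b) / 2)"
      proof -
        have eq: "wP * real ?d = (c1 + b) / 2" using dpos by (simp add: wP_def)
        have "complex_of_real wP * of_nat ?d = complex_of_real (wP * real ?d)" by simp
        also have "\<dots> = of_real ((c1 + b) / 2)" by (simp only: eq)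
        finally show ?thesis .
      qed
      have hN: "complex_of_real wN * of_nat ?d = of_real ((c1 - b) / 2)"
      proof -
        have eq: "wN * real ?d = (c1 - b) / 2" using dpos by (simp add: wN_def)
        have "complex_of_real wN * of_nat ?d = complex_of_real (wN * real ?d)" by simp
        also have "\<dots> = of_real ((c1 - b) / 2)" by (simp only: eq)
        finally show ?thesis .
      qed
      have ent: "((\<Sum>j<?d. cmat_scale (complex_of_real (pZ j)) (Zu j ** \<rho> ** cmat_adj (Zu j)))
        + (\<Sum>x\<in>S. cmat_scale (complex_of_real wP) (Pu x ** \<rho> ** cmat_adj (Pu x)))
        + (\<Sum>x\<in>S. cmat_scale (complex_of_real wN) (Nu x ** \<rho> ** cmat_adj (Nu x)))) $ p $ q = T \<rho> $ p $ q" for p q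
      proof -
        let ?Sp = "\<Sum>z\<in>UNIV - {p}. \<rho> $ z $ z"
        have z2: "(\<Sum>j<?d. (Zu j ** \<rho> ** cmat_adj (Zu j)) $ p $ q) = (if p = q then of_nat ?d * \<rho> $ p $ p else 0)"
          using Z_avg[OF eb evn, of \<rho> p q] unfolding sum_component Zu_def .
        have z0: "(Zu 0 ** \<rho> ** cmat_adj (Zu 0)) $ p $ q = \<rho> $ p $ q"
          unfolding Zu_def Z0[OF eb evn] ..
        have z1: "(\<Sum>j<?d. cmat_scale (complex_of_real (pZ j)) (Zu j ** \<rho> ** cmat_adj (Zu j))) $ p $ q
            = complex_of_real ((c0 - a) / real ?d) * (\<Sum>j<?d. (Zu j ** \<rho> ** cmat_adj (Zu j)) $ p $ q)
              + (\<Sum>j<?d. if j = 0 then complex_of_real a * (Zu j ** \<rho> ** cmat_adj (Zu j)) $ p $ q else 0)"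
          unfolding sum_component cmat_scale_entry sum_distrib_left sum.distrib[symmetric]
          by (intro sum.cong refl) (simp add: pZ_def distrib_right)
        also have "(\<Sum>j<?d. if j = 0 then complex_of_real a * (Zu j ** \<rho> ** cmat_adj (Zu j)) $ p $ q else 0)
            = complex_of_real a * \<rho> $ p $ q" using dpos z0 by simp
        finally have zz: "(\<Sum>j<?d. cmat_scale (complex_of_real (pZ j)) (Zu j ** \<rho> ** cmat_adj (Zu j))) $ p $ q
            = complex_of_real ((c0 - a) / real ?d) * (if p = q then of_nat ?d * \<rho> $ p $ p else 0)
              + complex_of_real a * \<rho> $ p $ q" unfolding z2 .
        have pp: "(\<Sum>x\<in>S. cmat_scale (complex_of_real wP) (Pu x ** \<rho> ** cmat_adj (Pu x))) $ p $ q
            = (complex_of_real wP * of_nat ?d) * (if p = q then ?Sp else 1 * \<rho> $ q $ p)"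
        proof -
          have "(\<Sum>x\<in>S. cmat_scale (complex_of_real wP) (Pu x ** \<rho> ** cmat_adj (Pu x))) $ p $ q
              = complex_of_real wP * (\<Sum>r<?d - 1. \<Sum>j<?d. (Pu (r, j) ** \<rho> ** cmat_adj (Pu (r, j))) $ p $ q)"
            unfolding sum_component cmat_scale_entry sum_distrib_left[symmetric] S_def
            by (simp add: sum.cartesian_product)
          also have "(\<Sum>r<?d - 1. \<Sum>j<?d. (Pu (r, j) ** \<rho> ** cmat_adj (Pu (r, j))) $ p $ q)
              = of_nat ?d * (if p = q then ?Sp else 1 * \<rho> $ q $ p)"
            using fam_entry[OF eb evn, where \<sigma> = "\<lambda>r x. 1" and s = 1 and \<rho> = \<rho> and a = p and b = q]
            unfolding sum_component Pu_def by simp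
          finally show ?thesis by (simp add: mult.assoc)
        qed
        have s2: "sgm e r (Mt e r x) * cnj (sgm e r x) = -1" if r: "r < ?d - 1" for r x
        proof -
          have "e (Mt e r x) \<noteq> e x" using Mt_ne[OF eb evn r, of x] e_inj[OF eb evn] by simp
          thus ?thesis unfolding sgm_def Mt_invol[OF eb evn r] by auto
        qed
        have nn: "(\<Sum>x\<in>S. cmat_scale (complex_of_real wN) (Nu x ** \<rho> ** cmat_adj (Nu x))) $ p $ q
            = (complex_of_real wN * of_nat ?d) * (if p = q then ?Sp else -1 * \<rho> $ q $ p)"
        proof -
          have "(\<Sum>x\<in>S. cmat_scale (complex_of_real wN) (Nu x ** \<rho> ** cmat_adj (Nu x))) $ p $ q
              = complex_of_real wN * (\<Sum>r<?d - 1. \<Sum>j<?d. (Nu (r, j) ** \<rho> ** cmat_adj (Nu (r, j))) $ p $ q)"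
            unfolding sum_component cmat_scale_entry sum_distrib_left[symmetric] S_def
            by (simp add: sum.cartesian_product)
          also have "(\<Sum>r<?d - 1. \<Sum>j<?d. (Nu (r, j) ** \<rho> ** cmat_adj (Nu (r, j))) $ p $ q)
              = of_nat ?d * (if p = q then ?Sp else -1 * \<rho> $ q $ p)"
            using fam_entry[OF eb evn, where \<sigma> = "sgm e" and s = "-1" and \<rho> = \<rho> and a = p and b = q] s2
            unfolding sum_component Nu_def by (simp add: sgm_def)
          finally show ?thesis by (simp add: mult.assoc)
        qed
        have hZ': "complex_of_real ((c0 - a) / real ?d) * (of_nat ?d * X) = of_real (c0 - a) * X" for X
          by (simp only: mult.assoc[symmetric] hZ)
        have T_f: "T \<rho> $ p $ q = (if p = q then of_real c0 * \<rho> $ p $ p + of_real c1 * ?Sp else of_real a * \<rho> $ p $ q + of_real b * \<rho> $ q $ p)"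
          using T_formula[OF lin cov ij0, of \<rho> p q] unfolding Aa Bb C0c C1c .
        show ?thesis
        proof (cases "p = q")
          case True
          have "((\<Sum>j<?d. cmat_scale (complex_of_real (pZ j)) (Zu j ** \<rho> ** cmat_adj (Zu j)))
            + (\<Sum>x\<in>S. cmat_scale (complex_of_real wP) (Pu x ** \<rho> ** cmat_adj (Pu x)))
            + (\<Sum>x\<in>S. cmat_scale (complex_of_real wN) (Nu x ** \<rho> ** cmat_adj (Nu x)))) $ p $ q
            = of_real (c0 - a) * \<rho> $ p $ p + of_real a * \<rho> $ p $ p + of_real ((c1 + b) / 2) * ?Sp + of_real ((c1 - b) / 2) * ?Sp"
            unfolding vector_add_component zz pp nn hP hN using True by (simp only: simp_thms if_True hZ')
          also have "\<dots> = of_real c0 * \<rho> $ p $ p + of_real c1 * ?Sp" by (simp add: field_simps)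
          finally show ?thesis using True T_f by simp
        next
          case False
          have "((\<Sum>j<?d. cmat_scale (complex_of_real (pZ j)) (Zu j ** \<rho> ** cmat_adj (Zu j)))
            + (\<Sum>x\<in>S. cmat_scale (complex_of_real wP) (Pu x ** \<rho> ** cmat_adj (Pu x)))
            + (\<Sum>x\<in>S. cmat_scale (complex_of_real wN) (Nu x ** \<rho> ** cmat_adj (Nu x)))) $ p $ q
            = of_real a * \<rho> $ p $ q + of_real ((c1 + b) / 2) * (1 * \<rho> $ q $ p) + of_real ((c1 - b) / 2) * (-1 * \<rho> $ q $ p)"
            unfolding vector_add_component zz pp nn hP hN using False by simp
          also have "\<dots> = of_real a * \<rho> $ p $ q + of_real b * \<rho> $ q $ p" by (simp add: field_simps)
          finally show ?thesis using False T_f by simp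
        qed
      qed
      thus ?thesis by (simp add: vec_eq_iff)
    qed
  qed
  thus ?thesis unfolding MUw_def .
qed


end
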